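(* Let $n\in\mathbb{N}$ and $\lambda\in(0,n)$. If the algorithm $C_\lambda$ (on inputs in $\{0,1\}^n$) is $(\varepsilon,\delta)$-differentially private, then the bit-sum protocol $P_{n,\lambda}$ is $(\varepsilon,\delta)$-differentially private in the shuffled model.
   Context: An algorithm $M$ on datasets in $\{0,1\}^n$ is $(\varepsilon,\delta)$-differentially private if for all $X,X'$ differing in one coordinate and every set $T$ of outputs, $\Pr[M(X)\in T]\le e^{\varepsilon}\Pr[M(X')\in T]+\delta$. The bit-sum protocol $P_{n,\lambda}$: each of $n$ users with $x_i\in\{0,1\}$ independently draws $b\sim\mathrm{Ber}(\lambda/n)$ and sends $y_i=x_i$ if $b=0$ and a fresh $\mathrm{Ber}(1/2)$ bit if $b=1$; a shuffler outputs $(y_1,\dots,y_n)$ in uniformly random order; the analyzer outputs $\frac{n}{n-\lambda}(\sum_i y_i-\lambda/2)$. $P_{n,\lambda}$ is $(\varepsilon,\delta)$-differentially private in the shuffled model if the map from $(x_1,\dots,x_n)$ to the shuffled sequence of messages is $(\varepsilon,\delta)$-differentially private. The algorithm $C_\lambda$ on input $(x_1,\dots,x_n)$: sample $s\sim\mathrm{Bin}(n,\lambda/n)$; choose $H\subseteq[n]$ uniformly among sets of size $s$; output $\sum_{i\notin H}x_i+B$ with $B\sim\mathrm{Bin}(s,1/2)$ independent. *)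

theory Defs
  imports "HOL-Probability.Probability" "HOL-Combinatorics.Permutations"
begin

text \<open>Datasets in {0,1}^n are boolean lists of length n (True = 1).\<close>

definition neighbours :: "nat \<Rightarrow> bool list \<Rightarrow> bool list \<Rightarrow> bool" where
  "neighbours n X X' \<longleftrightarrow> length X = n \<and> length X' = n \<and>
     (\<exists>i<n. X ! i \<noteq> X' ! i \<and> (\<forall>j<n. j \<noteq> i \<longrightarrow> X ! j = X' ! j))"

definition diff_private :: "nat \<Rightarrow> real \<Rightarrow> real \<Rightarrow> (bool list \<Rightarrow> 'b pmf) \<Rightarrow> bool" where
  "diff_private n \<epsilon> \<delta> M \<longleftrightarrow>
     (\<forall>X X' T. neighbours n X X' \<longrightarrow>
        measure_pmf.prob (M X) T \<le> exp \<epsilon> * measure_pmf.prob (M X') T + \<delta>)"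

fun seq_pmf :: "'a pmf list \<Rightarrow> 'a list pmf" where
  "seq_pmf [] = return_pmf []"
| "seq_pmf (p # ps) = bind_pmf p (\<lambda>x. bind_pmf (seq_pmf ps) (\<lambda>xs. return_pmf (x # xs)))"

definition randomizer :: "nat \<Rightarrow> real \<Rightarrow> bool \<Rightarrow> bool pmf" where
  "randomizer n lam x = bind_pmf (bernoulli_pmf (lam / real n))
      (\<lambda>b. if b then bernoulli_pmf (1/2) else return_pmf x)"

definition shuffle :: "'a list \<Rightarrow> 'a list pmf" where
  "shuffle ys = map_pmf (\<lambda>\<sigma>. map (\<lambda>i. ys ! \<sigma> i) [0..<length ys])
      (pmf_of_set {\<sigma>. \<sigma> permutes {..<length ys}})"

text \<open>The map from inputs to the shuffled sequence of messages of P_{n,lambda}.\<close>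
definition shuffled_bitsum :: "nat \<Rightarrow> real \<Rightarrow> bool list \<Rightarrow> bool list pmf" where
  "shuffled_bitsum n lam X = bind_pmf (seq_pmf (map (randomizer n lam) X)) shuffle"

definition C_alg :: "nat \<Rightarrow> real \<Rightarrow> bool list \<Rightarrow> nat pmf" where
  "C_alg n lam X = bind_pmf (binomial_pmf n (lam / real n)) (\<lambda>s.
      bind_pmf (pmf_of_set {H. H \<subseteq> {..<n} \<and> card H = s}) (\<lambda>H.
      map_pmf (\<lambda>B. card {i. i < n \<and> i \<notin> H \<and> X ! i} + B) (binomial_pmf s (1/2))))"

end

theory Submission
  imports Defs
begin


definition cnt :: "bool list \<Rightarrow> nat" where "cnt ys = length (filter id ys)"

lemma seq_set_len: "ys \<in> set_pmf (seq_pmf ps) \<Longrightarrow> length ys = length ps"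
  by (induction ps arbitrary: ys) auto

lemma prob_bind_finite:
  assumes "finite A" "set_pmf M \<subseteq> A"
  shows "measure_pmf.prob (bind_pmf M f) T = (\<Sum>k\<in>A. pmf M k * measure_pmf.prob (f k) T)"
proof -
  have "ennreal (measure_pmf.prob (bind_pmf M f) T) = emeasure (bind_pmf M f) T"
    by (simp add: measure_pmf.emeasure_eq_measure)
  also have "\<dots> = (\<integral>\<^sup>+x. emeasure (f x) T \<partial>M)" by simp
  also have "\<dots> = (\<Sum>x\<in>A. emeasure (f x) T * pmf M x)"
    using assms by (intro nn_integral_measure_pmf_support) (auto simp: set_pmf_eq)
  also have "\<dots> = ennreal (\<Sum>k\<in>A. pmf M k * measure_pmf.prob (f k) T)"
    by (simp add: measure_pmf.emeasure_eq_measure ennreal_mult' sum_nonneg mult.commute flip: sum_ennreal)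
  finally show ?thesis by (simp add: sum_nonneg)
qed

lemma dp_post:
  fixes P Q :: "nat pmf" and e d :: real
  assumes "finite A" "set_pmf P \<subseteq> A" "set_pmf Q \<subseteq> A" "e \<ge> 0"
    and dp: "\<And>T. measure_pmf.prob P T \<le> e * measure_pmf.prob Q T + d"
    and g: "\<And>k. 0 \<le> g k" "\<And>k. g k \<le> 1"
  shows "(\<Sum>k\<in>A. pmf P k * g k) \<le> e * (\<Sum>k\<in>A. pmf Q k * g k) + d"
proof -
  define S where "S = {k\<in>A. pmf P k > e * pmf Q k}"
  have fS: "finite S" "S \<subseteq> A" using assms(1) by (auto simp: S_def)
  have "(\<Sum>k\<in>A. pmf P k * g k) - e * (\<Sum>k\<in>A. pmf Q k * g k) = (\<Sum>k\<in>A. g k * (pmf P k - e * pmf Q k))"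
    by (simp add: sum_distrib_left sum_subtractf algebra_simps)
  also have "\<dots> \<le> (\<Sum>k\<in>A. if k \<in> S then pmf P k - e * pmf Q k else 0)"
  proof (rule sum_mono)
    fix k assume "k \<in> A"
    show "g k * (pmf P k - e * pmf Q k) \<le> (if k \<in> S then pmf P k - e * pmf Q k else 0)"
      using g[of k] \<open>k \<in> A\<close> by (auto simp: S_def mult_le_cancel_right1 mult_nonneg_nonpos mult_left_le_one_le)
  qed
  also have "\<dots> = (\<Sum>k\<in>S. pmf P k - e * pmf Q k)"
    using fS assms(1) by (auto simp: sum.If_cases S_def intro!: sum.cong)
  also have "\<dots> = measure_pmf.prob P S - e * measure_pmf.prob Q S"
    using fS by (simp add: measure_measure_pmf_finite sum_subtractf sum_distrib_left)
  also have "\<dots> \<le> d" using dp[of S] by simp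
  finally show ?thesis by simp
qed

lemma shuffle_perm:
  assumes "\<pi> permutes {..<length ys}"
  shows "shuffle (permute_list \<pi> ys) = shuffle ys"
proof -
  let ?S = "{\<sigma>. \<sigma> permutes {..<length ys}}"
  have fin: "?S \<noteq> {}" "finite ?S" by (auto intro: finite_permutations permutes_id)
  have inj: "inj_on ((\<circ>) \<pi>) ?S"
    using permutes_inj[OF assms] by (auto simp: inj_on_def fun_eq_iff inj_def)
  have img: "(\<circ>) \<pi> ` ?S = ?S"
    using image_compose_permutations_left[OF assms] by blast
  have "shuffle (permute_list \<pi> ys) = map_pmf (\<lambda>\<sigma>. permute_list \<sigma> (permute_list \<pi> ys)) (pmf_of_set ?S)"
    by (simp add: shuffle_def permute_list_def)
  also have "\<dots> = map_pmf (\<lambda>\<sigma>. permute_list (\<pi> \<circ> \<sigma>) ys) (pmf_of_set ?S)"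
    by (intro map_pmf_cong refl) (simp add: set_pmf_of_set[OF fin] permute_list_compose)
  also have "\<dots> = map_pmf (\<lambda>\<sigma>. permute_list \<sigma> ys) (map_pmf ((\<circ>) \<pi>) (pmf_of_set ?S))"
    by (simp add: pmf.map_comp o_def)
  also have "\<dots> = shuffle ys"
    by (simp add: map_pmf_of_set_inj[OF inj fin(1) fin(2)] img shuffle_def permute_list_def)
  finally show ?thesis .
qed

lemma shuffle_mset:
  assumes "mset xs = mset ys" shows "shuffle xs = shuffle ys"
proof -
  obtain p where "p permutes {..<length ys}" "permute_list p ys = xs"
    using mset_eq_permutation[OF assms] by blast
  then show ?thesis using shuffle_perm by blast
qed

lemma cnt_le: "cnt ys \<le> length ys" by (simp add: cnt_def)

lemma mset_canon: "mset ys = mset (replicate (cnt ys) True @ replicate (length ys - cnt ys) False)"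
proof (induction ys)
  case (Cons y ys)
  then show ?case using cnt_le[of ys] by (cases y) (auto simp: cnt_def Suc_diff_le)
qed (simp add: cnt_def)

lemma shuffle_canon: "shuffle ys = shuffle (replicate (cnt ys) True @ replicate (length ys - cnt ys) False)"
  by (rule shuffle_mset[OF mset_canon])



lemma seq_bind:
  "seq_pmf (map (\<lambda>x. bind_pmf P (K x)) xs) =
   bind_pmf (replicate_pmf (length xs) P) (\<lambda>bs. seq_pmf (map (\<lambda>(x,b). K x b) (zip xs bs)))"
proof (induction xs)
  case Nil then show ?case by simp
next
  case (Cons x xs)
  show ?case
    apply (simp add: Cons bind_assoc_pmf bind_return_pmf)
    apply (rule bind_pmf_cong[OF refl])
    apply (subst bind_commute_pmf)
    apply simp
    done
qed

lemma cnt_K: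
  assumes "length bs = length X"
  shows "map_pmf cnt (seq_pmf (map (\<lambda>(x,b). if b then bernoulli_pmf (1/2) else return_pmf x) (zip X bs)))
     = map_pmf (\<lambda>B. cnt (map (\<lambda>(x,b). \<not> b \<and> x) (zip X bs)) + B) (binomial_pmf (cnt bs) (1/2))"
  using assms
proof (induction X arbitrary: bs)
  case Nil then show ?case by (simp add: cnt_def binomial_pmf_0)
next
  case (Cons x X)
  then obtain b bs' where bs: "bs = b # bs'" and l: "length bs' = length X" by (cases bs) auto
  note IH = Cons.IH[OF l]
  show ?case
  proof (cases b)
    case True
    have "map_pmf cnt (seq_pmf (map (\<lambda>(x,b). if b then bernoulli_pmf (1/2) else return_pmf x) (zip (x#X) bs)))
       = bind_pmf (bernoulli_pmf (1/2)) (\<lambda>y. map_pmf (\<lambda>c. (if y then 1 else 0) + c)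
            (map_pmf cnt (seq_pmf (map (\<lambda>(x,b). if b then bernoulli_pmf (1/2) else return_pmf x) (zip X bs')))))"
      by (simp add: bs True map_bind_pmf pmf.map_comp o_def cnt_def map_pmf_def bind_assoc_pmf bind_return_pmf)
         (auto intro!: bind_pmf_cong)
    also have "\<dots> = bind_pmf (bernoulli_pmf (1/2)) (\<lambda>y. map_pmf (\<lambda>c. (if y then 1 else 0) + c)
            (map_pmf (\<lambda>B. cnt (map (\<lambda>(x,b). \<not> b \<and> x) (zip X bs')) + B) (binomial_pmf (cnt bs') (1/2))))"
      by (simp add: IH)
    also have "\<dots> = map_pmf (\<lambda>B. cnt (map (\<lambda>(x,b). \<not> b \<and> x) (zip (x#X) bs)) + B) (binomial_pmf (cnt bs) (1/2))"
      by (simp add: bs True cnt_def binomial_pmf_Suc map_pmf_def bind_assoc_pmf bind_return_pmf algebra_simps)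
    finally show ?thesis .
  next
    case False
    have "map_pmf cnt (seq_pmf (map (\<lambda>(x,b). if b then bernoulli_pmf (1/2) else return_pmf x) (zip (x#X) bs)))
       = map_pmf (\<lambda>c. (if x then 1 else 0) + c)
            (map_pmf cnt (seq_pmf (map (\<lambda>(x,b). if b then bernoulli_pmf (1/2) else return_pmf x) (zip X bs'))))"
      by (simp add: bs False pmf.map_comp o_def cnt_def map_pmf_def bind_assoc_pmf bind_return_pmf)
    also have "\<dots> = map_pmf (\<lambda>B. cnt (map (\<lambda>(x,b). \<not> b \<and> x) (zip (x#X) bs)) + B) (binomial_pmf (cnt bs) (1/2))"
      by (simp add: IH pmf.map_comp o_def bs False cnt_def)
    finally show ?thesis .
  qed
qed



lemma pmf_replicate:
  "pmf (replicate_pmf n d) xs = (if length xs = n then prod_list (map (pmf d) xs) else 0)"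
proof (induction n arbitrary: xs)
  case 0 then show ?case by (cases xs) (auto simp: pmf_return)
next
  case (Suc n)
  have eq: "replicate_pmf (Suc n) d = map_pmf (\<lambda>(x,xs). x#xs) (pair_pmf d (replicate_pmf n d))"
    by (simp add: pair_pmf_def map_bind_pmf bind_assoc_pmf bind_return_pmf)
  have inj: "inj (\<lambda>(x::'a,xs). x#xs)" by (auto simp: inj_def)
  show ?case
  proof (cases xs)
    case Nil
    then show ?thesis by (simp add: eq pmf_eq_0_set_pmf)
  next
    case (Cons y ys)
    have "pmf (replicate_pmf (Suc n) d) xs = pmf (pair_pmf d (replicate_pmf n d)) (y, ys)"
      unfolding eq Cons using pmf_map_inj'[OF inj, of "pair_pmf d (replicate_pmf n d)" "(y,ys)"] by simp
    then show ?thesis by (simp add: pmf_pair Suc Cons)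
  qed
qed

lemma prod_bern:
  "prod_list (map (pmf (bernoulli_pmf p)) xs) = p ^ cnt xs * (1 - p) ^ (length xs - cnt xs)"
  if "0 \<le> p" "p \<le> 1"
proof (induction xs)
  case Nil then show ?case by (simp add: cnt_def)
next
  case (Cons x xs)
  then show ?case using that cnt_le[of xs] by (cases x) (auto simp: cnt_def Suc_diff_le)
qed

lemma subset_dist:
  fixes p :: real
  assumes p: "0 < p" "p < 1"
  shows "map_pmf (\<lambda>bs. {i. i < n \<and> bs ! i}) (replicate_pmf n (bernoulli_pmf p))
       = bind_pmf (binomial_pmf n p) (\<lambda>s. pmf_of_set {H. H \<subseteq> {..<n} \<and> card H = s})"
  (is "map_pmf ?f ?M = ?R")
proof (rule pmf_eqI)
  fix H :: "nat set"
  let ?S = "\<lambda>s. {H. H \<subseteq> {..<n} \<and> card H = s}"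
  have finS: "finite (?S s)" for s by (rule finite_subset[of _ "Pow {..<n}"]) auto
  have cardS: "card (?S s) = n choose s" for s using n_subsets[of "{..<n}" s] by simp
  have "pmf ?R H = (\<Sum>s\<in>{..n}. pmf (pmf_of_set (?S s)) H * pmf (binomial_pmf n p) s)"
    unfolding pmf_bind using p by (subst integral_measure_pmf_real[where A="{..n}"]) auto
  also have "\<dots> = (\<Sum>s\<in>{..n}. indicator (?S s) H / real (n choose s) * pmf (binomial_pmf n p) s)"
  proof (rule sum.cong[OF refl])
    fix s assume "s \<in> {..n}"
    then have "{..<s} \<in> ?S s" by auto
    then have "?S s \<noteq> {}" by blast
    then show "pmf (pmf_of_set (?S s)) H * pmf (binomial_pmf n p) s =
       indicator (?S s) H / real (n choose s) * pmf (binomial_pmf n p) s"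
      using finS[of s] cardS[of s] by simp
  qed
  also have "\<dots> = (if H \<subseteq> {..<n} then p ^ card H * (1 - p) ^ (n - card H) else 0)"
  proof (cases "H \<subseteq> {..<n}")
    case True
    have cH: "card H \<le> n" using card_mono[OF _ True] by simp
    have "(\<Sum>s\<in>{..n}. indicator (?S s) H / real (n choose s) * pmf (binomial_pmf n p) s)
       = (\<Sum>s\<in>{..n}. if s = card H then pmf (binomial_pmf n p) s / real (n choose s) else 0)"
      by (rule sum.cong) (auto simp: indicator_def True)
    also have "\<dots> = pmf (binomial_pmf n p) (card H) / real (n choose card H)"
      using cH by (simp add: sum.delta)
    also have "\<dots> = p ^ card H * (1 - p) ^ (n - card H)"
      using cH p by (simp add: binomial_eq_0_iff)
    finally show ?thesis using True by simp
  next
    case False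
    then show ?thesis by (auto simp: indicator_def intro!: sum.neutral)
  qed
  also have "\<dots> = pmf (map_pmf ?f ?M) H"
  proof (cases "H \<subseteq> {..<n}")
    case True
    define bs0 where "bs0 = map (\<lambda>i. i \<in> H) [0..<n]"
    have l0: "length bs0 = n" by (simp add: bs0_def)
    have fbs0: "?f bs0 = H" using True by (auto simp: bs0_def)
    have setM: "set_pmf ?M = {xs. length xs = n}" using p by (simp add: set_replicate_pmf)
    have inj: "inj_on ?f (set_pmf ?M)"
    proof (rule inj_onI)
      fix xs ys assume "xs \<in> set_pmf ?M" "ys \<in> set_pmf ?M" "?f xs = ?f ys"
      then have l: "length xs = n" "length ys = n" and e: "?f xs = ?f ys" using setM by auto
      have "xs ! i = ys ! i" if "i < n" for i
      proof -
        have "(i \<in> ?f xs) = (i \<in> ?f ys)" using e by simp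
        then show ?thesis using that by simp
      qed
      then show "xs = ys" using l by (intro nth_equalityI) auto
    qed
    have "cnt bs0 = card H"
    proof -
      have "cnt bs0 = length (filter (\<lambda>i. i \<in> H) [0..<n])"
        by (simp add: cnt_def bs0_def filter_map o_def)
      also have "\<dots> = card (set (filter (\<lambda>i. i \<in> H) [0..<n]))"
        by (metis distinct_card distinct_filter distinct_upt)
      also have "set (filter (\<lambda>i. i \<in> H) [0..<n]) = H" using True by auto
      finally show ?thesis .
    qed
    then have "pmf (map_pmf ?f ?M) H = p ^ card H * (1 - p) ^ (n - card H)"
      using pmf_map_inj[OF inj, of bs0] fbs0 l0 setM p
      by (simp add: pmf_replicate prod_bern)
    then show ?thesis using True by simp
  next
    case False
    have "H \<notin> set_pmf (map_pmf ?f ?M)" using False by auto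
    then have "pmf (map_pmf ?f ?M) H = 0" by (simp add: set_pmf_iff del: set_map_pmf)
    then show ?thesis using False by simp
  qed
  finally show "pmf (map_pmf ?f ?M) H = pmf ?R H" ..
qed



lemma main_eq:
  assumes len: "length X = n" and lam: "0 < lam" "lam < real n"
  shows "map_pmf cnt (seq_pmf (map (randomizer n lam) X)) = C_alg n lam X"
proof -
  define p where "p = lam / real n"
  have p: "0 < p" "p < 1" using lam by (auto simp: p_def)
  define K where "K = (\<lambda>x b. if b then bernoulli_pmf (1/2) else return_pmf (x::bool))"
  define f where "f = (\<lambda>bs. {i. i < n \<and> bs ! i})"
  define G where "G = (\<lambda>H. map_pmf (\<lambda>B. card {i. i < n \<and> i \<notin> H \<and> X ! i} + B) (binomial_pmf (card H) (1/2)))"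
  define U where "U = (\<lambda>s. pmf_of_set {H. H \<subseteq> {..<n} \<and> card H = s})"
  have r: "randomizer n lam = (\<lambda>x. bind_pmf (bernoulli_pmf p) (K x))"
    by (auto simp: randomizer_def K_def p_def fun_eq_iff)
  have "map_pmf cnt (seq_pmf (map (randomizer n lam) X))
     = bind_pmf (replicate_pmf n (bernoulli_pmf p)) (\<lambda>bs. map_pmf cnt (seq_pmf (map (\<lambda>(x,b). K x b) (zip X bs))))"
    unfolding r seq_bind len by (simp add: map_bind_pmf)
  also have "\<dots> = bind_pmf (replicate_pmf n (bernoulli_pmf p)) (\<lambda>bs. G (f bs))"
  proof (rule bind_pmf_cong[OF refl])
    fix bs assume "bs \<in> set_pmf (replicate_pmf n (bernoulli_pmf p))"
    then have lb: "length bs = n" by (simp add: set_replicate_pmf)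
    have c1: "cnt bs = card (f bs)"
      by (simp add: cnt_def f_def length_filter_conv_card lb)
    have c2: "cnt (map (\<lambda>(x,b). \<not> b \<and> x) (zip X bs)) = card {i. i < n \<and> i \<notin> f bs \<and> X ! i}"
    proof -
      have "cnt (map (\<lambda>(x,b). \<not> b \<and> x) (zip X bs)) = length (filter (\<lambda>(x,b). \<not> b \<and> x) (zip X bs))"
        by (simp add: cnt_def filter_map o_def)
      also have "\<dots> = card {i. i < n \<and> (case zip X bs ! i of (x,b) \<Rightarrow> \<not> b \<and> x)}"
        by (simp add: length_filter_conv_card len lb)
      also have "{i. i < n \<and> (case zip X bs ! i of (x,b) \<Rightarrow> \<not> b \<and> x)} = {i. i < n \<and> i \<notin> f bs \<and> X ! i}"
        using len lb by (auto simp: f_def)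
      finally show ?thesis .
    qed
    show "map_pmf cnt (seq_pmf (map (\<lambda>(x,b). K x b) (zip X bs))) = G (f bs)"
      unfolding K_def using cnt_K[of bs X] lb len c1 c2 by (simp add: G_def)
  qed
  also have "\<dots> = bind_pmf (map_pmf f (replicate_pmf n (bernoulli_pmf p))) G"
    by (simp add: bind_map_pmf)
  also have "\<dots> = bind_pmf (bind_pmf (binomial_pmf n p) U) G"
    using subset_dist[OF p, of n] by (simp add: f_def U_def)
  also have "\<dots> = bind_pmf (binomial_pmf n p) (\<lambda>s. bind_pmf (U s) G)"
    by (simp add: bind_assoc_pmf)
  also have "\<dots> = C_alg n lam X"
    unfolding C_alg_def p_def[symmetric]
  proof (rule bind_pmf_cong[OF refl])
    fix s assume "s \<in> set_pmf (binomial_pmf n p)"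
    then have sn: "s \<le> n" using p by simp
    have finS: "finite {H. H \<subseteq> {..<n} \<and> card H = s}"
      by (rule finite_subset[of _ "Pow {..<n}"]) auto
    have "{..<s} \<in> {H. H \<subseteq> {..<n} \<and> card H = s}" using sn by auto
    then have ne: "{H. H \<subseteq> {..<n} \<and> card H = s} \<noteq> {}" by blast
    show "bind_pmf (U s) G = bind_pmf (pmf_of_set {H. H \<subseteq> {..<n} \<and> card H = s})
        (\<lambda>H. map_pmf (\<lambda>B. card {i. i < n \<and> i \<notin> H \<and> X ! i} + B) (binomial_pmf s (1 / 2)))"
      unfolding U_def
      by (rule bind_pmf_cong[OF refl]) (simp add: G_def set_pmf_of_set[OF ne finS])
  qed
  finally show ?thesis .
qed

theorem claim4p3:
  fixes n :: nat and lam \<epsilon> \<delta> :: real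
  assumes "0 < lam" and "lam < real n"
    and "diff_private n \<epsilon> \<delta> (C_alg n lam)"
  shows "diff_private n \<epsilon> \<delta> (shuffled_bitsum n lam)"
  unfolding diff_private_def
proof (intro allI impI)
  fix X X' :: "bool list" and T
  assume nb: "neighbours n X X'"
  then have lX: "length X = n" and lX': "length X' = n" by (auto simp: neighbours_def)
  define g where "g = (\<lambda>k. measure_pmf.prob (shuffle (replicate k True @ replicate (n - k) False)) T)"
  have sb: "shuffled_bitsum n lam Y = bind_pmf (C_alg n lam Y) (\<lambda>k. shuffle (replicate k True @ replicate (n - k) False))"
    if "length Y = n" for Y
  proof -
    have "shuffled_bitsum n lam Y = bind_pmf (seq_pmf (map (randomizer n lam) Y))
            (\<lambda>ys. shuffle (replicate (cnt ys) True @ replicate (n - cnt ys) False))"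
      unfolding shuffled_bitsum_def
      by (rule bind_pmf_cong[OF refl]) (metis shuffle_canon seq_set_len length_map that)
    also have "\<dots> = bind_pmf (map_pmf cnt (seq_pmf (map (randomizer n lam) Y)))
            (\<lambda>k. shuffle (replicate k True @ replicate (n - k) False))"
      by (simp add: bind_map_pmf)
    finally show ?thesis using main_eq[OF that assms(1,2)] by simp
  qed
  have supp: "set_pmf (C_alg n lam Y) \<subseteq> {..n}" if "length Y = n" for Y
  proof -
    have "set_pmf (C_alg n lam Y) = cnt ` set_pmf (seq_pmf (map (randomizer n lam) Y))"
      using main_eq[OF that assms(1,2)] by (metis set_map_pmf)
    moreover have "cnt ys \<le> n" if "ys \<in> set_pmf (seq_pmf (map (randomizer n lam) Y))" for ys
      using cnt_le[of ys] seq_set_len[OF that] \<open>length Y = n\<close> by simp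
    ultimately show ?thesis by auto
  qed
  have "measure_pmf.prob (shuffled_bitsum n lam X) T = (\<Sum>k\<in>{..n}. pmf (C_alg n lam X) k * g k)"
    unfolding sb[OF lX] g_def by (rule prob_bind_finite[OF _ supp[OF lX]]) simp
  also have "\<dots> \<le> exp \<epsilon> * (\<Sum>k\<in>{..n}. pmf (C_alg n lam X') k * g k) + \<delta>"
  proof (rule dp_post[OF _ supp[OF lX] supp[OF lX']])
    fix T' show "measure_pmf.prob (C_alg n lam X) T' \<le> exp \<epsilon> * measure_pmf.prob (C_alg n lam X') T' + \<delta>"
      using assms(3) nb by (auto simp: diff_private_def)
  qed (auto simp: g_def)
  also have "(\<Sum>k\<in>{..n}. pmf (C_alg n lam X') k * g k) = measure_pmf.prob (shuffled_bitsum n lam X') T"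
    unfolding sb[OF lX'] g_def by (rule prob_bind_finite[OF _ supp[OF lX'], symmetric]) simp
  finally show "measure_pmf.prob (shuffled_bitsum n lam X) T \<le> exp \<epsilon> * measure_pmf.prob (shuffled_bitsum n lam X') T + \<delta>" .
qed

end
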